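(* Let $S=(G,P,\Lambda,I)$ be a completely simple semigroup with non-singular sandwich matrix $P$, and let $\mathbf 1=(1,1_G,1)$. Then every algebraic set $Y\subseteq S^n$ over $S$ (in the language $\mathcal{L}_S$) is the solution set of a system of the form $\{t_i(X)=\mathbf{1}\mid i\in\mathcal{I}\}$, where $X=(x_1,\dots,x_n)$ and each $t_i$ is an $\mathcal{L}_S$-term.
   Context: Rees representation: a completely simple semigroup $S=(G,P,\Lambda,I)$ is given by a group $G$, index sets $\Lambda,I$ (each containing an element $1$), and a matrix $P=(p_{i\lambda})_{i\in I,\lambda\in\Lambda}$ over $G$ normalised so that $p_{1\lambda}=p_{i1}=1_G$; elements are triples $(\lambda,g,i)$ with product $(\lambda,g,i)(\mu,h,j)=(\lambda,gp_{i\mu}h,j)$ and inversion $(\lambda,g,i)^{-1}=(\lambda,p_{i\lambda}^{-1}g^{-1}p_{i\lambda}^{-1},i)$. $P$ is non-singular if it has no two equal rows and no two equal columns. The language $\mathcal{L}_S$ is $\{\cdot,{}^{-1}\}$ plus a constant for each element of $S$; terms are built from variables and constants using products and ${}^{-1}$; an algebraic set is the solution set of a system (set) of equations $t(X)=s(X)$ between terms. *)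

theory Defs
  imports "HOL-Algebra.Group"
begin

text \<open>The distinguished index elements "1" are l1 in Lam and i1 in I.\<close>

definition rees_carrier :: "('g,'b) monoid_scheme \<Rightarrow> 'l set \<Rightarrow> 'i set \<Rightarrow> ('l \<times> 'g \<times> 'i) set" where
  "rees_carrier G Lam I = Lam \<times> carrier G \<times> I"

definition rees_mult :: "('g,'b) monoid_scheme \<Rightarrow> ('i \<Rightarrow> 'l \<Rightarrow> 'g)
    \<Rightarrow> ('l \<times> 'g \<times> 'i) \<Rightarrow> ('l \<times> 'g \<times> 'i) \<Rightarrow> ('l \<times> 'g \<times> 'i)" where
  "rees_mult G P x y = (case x of (l, g, i) \<Rightarrow> case y of (m, h, j) \<Rightarrow>
      (l, g \<otimes>\<^bsub>G\<^esub> P i m \<otimes>\<^bsub>G\<^esub> h, j))"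

definition rees_inv :: "('g,'b) monoid_scheme \<Rightarrow> ('i \<Rightarrow> 'l \<Rightarrow> 'g)
    \<Rightarrow> ('l \<times> 'g \<times> 'i) \<Rightarrow> ('l \<times> 'g \<times> 'i)" where
  "rees_inv G P x = (case x of (l, g, i) \<Rightarrow>
      (l, inv\<^bsub>G\<^esub> (P i l) \<otimes>\<^bsub>G\<^esub> inv\<^bsub>G\<^esub> g \<otimes>\<^bsub>G\<^esub> inv\<^bsub>G\<^esub> (P i l), i))"

definition rees_data :: "('g,'b) monoid_scheme \<Rightarrow> ('i \<Rightarrow> 'l \<Rightarrow> 'g) \<Rightarrow> 'l set \<Rightarrow> 'i set
    \<Rightarrow> 'l \<Rightarrow> 'i \<Rightarrow> bool" where
  "rees_data G P Lam I l1 i1 \<longleftrightarrow> group G \<and> l1 \<in> Lam \<and> i1 \<in> I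
     \<and> (\<forall>i\<in>I. \<forall>l\<in>Lam. P i l \<in> carrier G)
     \<and> (\<forall>l\<in>Lam. P i1 l = \<one>\<^bsub>G\<^esub>) \<and> (\<forall>i\<in>I. P i l1 = \<one>\<^bsub>G\<^esub>)"

definition nonsingular :: "('i \<Rightarrow> 'l \<Rightarrow> 'g) \<Rightarrow> 'l set \<Rightarrow> 'i set \<Rightarrow> bool" where
  "nonsingular P Lam I \<longleftrightarrow>
     (\<forall>i\<in>I. \<forall>j\<in>I. i \<noteq> j \<longrightarrow> (\<exists>l\<in>Lam. P i l \<noteq> P j l))
   \<and> (\<forall>l\<in>Lam. \<forall>m\<in>Lam. l \<noteq> m \<longrightarrow> (\<exists>i\<in>I. P i l \<noteq> P i m))"

datatype 'c trm = Var nat | Cst 'c | Mul "'c trm" "'c trm" | Inv "'c trm"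

fun trm_vars :: "'c trm \<Rightarrow> nat set" where
  "trm_vars (Var k) = {k}"
| "trm_vars (Cst c) = {}"
| "trm_vars (Mul t s) = trm_vars t \<union> trm_vars s"
| "trm_vars (Inv t) = trm_vars t"

fun trm_consts :: "'c trm \<Rightarrow> 'c set" where
  "trm_consts (Var k) = {}"
| "trm_consts (Cst c) = {c}"
| "trm_consts (Mul t s) = trm_consts t \<union> trm_consts s"
| "trm_consts (Inv t) = trm_consts t"

text \<open>An L_S-term in the variables X = (x_0, ..., x_{n-1}).\<close>
definition is_term :: "('l \<times> 'g \<times> 'i) set \<Rightarrow> nat \<Rightarrow> ('l \<times> 'g \<times> 'i) trm \<Rightarrow> bool" where
  "is_term S n t \<longleftrightarrow> trm_vars t \<subseteq> {..<n} \<and> trm_consts t \<subseteq> S"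

fun teval :: "('g,'b) monoid_scheme \<Rightarrow> ('i \<Rightarrow> 'l \<Rightarrow> 'g) \<Rightarrow> ('l \<times> 'g \<times> 'i) list
    \<Rightarrow> ('l \<times> 'g \<times> 'i) trm \<Rightarrow> ('l \<times> 'g \<times> 'i)" where
  "teval G P xs (Var k) = xs ! k"
| "teval G P xs (Cst c) = c"
| "teval G P xs (Mul t s) = rees_mult G P (teval G P xs t) (teval G P xs s)"
| "teval G P xs (Inv t) = rees_inv G P (teval G P xs t)"

definition points :: "('g,'b) monoid_scheme \<Rightarrow> 'l set \<Rightarrow> 'i set \<Rightarrow> nat \<Rightarrow> ('l \<times> 'g \<times> 'i) list set" where
  "points G Lam I n = {xs. length xs = n \<and> set xs \<subseteq> rees_carrier G Lam I}"

definition solset :: "('g,'b) monoid_scheme \<Rightarrow> ('i \<Rightarrow> 'l \<Rightarrow> 'g) \<Rightarrow> 'l set \<Rightarrow> 'i set \<Rightarrow> nat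
    \<Rightarrow> (('l \<times> 'g \<times> 'i) trm \<times> ('l \<times> 'g \<times> 'i) trm) set \<Rightarrow> ('l \<times> 'g \<times> 'i) list set" where
  "solset G P Lam I n E = {xs \<in> points G Lam I n. \<forall>(t, s) \<in> E. teval G P xs t = teval G P xs s}"

definition algebraic_set :: "('g,'b) monoid_scheme \<Rightarrow> ('i \<Rightarrow> 'l \<Rightarrow> 'g) \<Rightarrow> 'l set \<Rightarrow> 'i set \<Rightarrow> nat
    \<Rightarrow> ('l \<times> 'g \<times> 'i) list set \<Rightarrow> bool" where
  "algebraic_set G P Lam I n Y \<longleftrightarrow>
     (\<exists>E. (\<forall>(t, s) \<in> E. is_term (rees_carrier G Lam I) n t \<and> is_term (rees_carrier G Lam I) n s)
          \<and> Y = solset G P Lam I n E)"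

end

theory Submission
  imports Defs
begin

lemma rees_mult_simp: "rees_mult G P (l,g,i) (m,h,j) = (l, g \<otimes>\<^bsub>G\<^esub> P i m \<otimes>\<^bsub>G\<^esub> h, j)"
  by (simp add: rees_mult_def)

lemma rees_inv_simp: "rees_inv G P (l,g,i) = (l, inv\<^bsub>G\<^esub> (P i l) \<otimes>\<^bsub>G\<^esub> inv\<^bsub>G\<^esub> g \<otimes>\<^bsub>G\<^esub> inv\<^bsub>G\<^esub> (P i l), i)"
  by (simp add: rees_inv_def)

lemma teval_in:
  assumes rd: "rees_data G P Lam I l1 i1" and t: "is_term (rees_carrier G Lam I) n t"
    and xs: "xs \<in> points G Lam I n"
  shows "teval G P xs t \<in> rees_carrier G Lam I"
  using t
proof (induction t)
  case (Var k)
  then show ?case using xs by (auto simp: is_term_def points_def)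
next
  case (Cst c)
  then show ?case by (auto simp: is_term_def)
next
  case (Mul t s)
  then have a: "teval G P xs t \<in> rees_carrier G Lam I" "teval G P xs s \<in> rees_carrier G Lam I"
    by (auto simp: is_term_def)
  from rd have grp: "group G" by (simp add: rees_data_def)
  from a show ?case using rd
    by (auto simp: rees_carrier_def rees_mult_def rees_data_def intro!: monoid.m_closed[OF group.is_monoid[OF grp]])
next
  case (Inv t)
  then have a: "teval G P xs t \<in> rees_carrier G Lam I"
    by (auto simp: is_term_def)
  from rd have grp: "group G" by (simp add: rees_data_def)
  from a show ?case using rd
    by (auto simp: rees_carrier_def rees_inv_def rees_data_def intro!: monoid.m_closed[OF group.is_monoid[OF grp]] group.inv_closed[OF grp])
qed

definition probe where
  "probe G P l1 i1 k m x = rees_mult G P (rees_mult G P (l1, \<one>\<^bsub>G\<^esub>, k) x) (m, \<one>\<^bsub>G\<^esub>, i1)"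

lemma probe_val:
  assumes rd: "rees_data G P Lam I l1 i1" and k: "k \<in> I" and m: "m \<in> Lam"
    and l: "l \<in> Lam" and g: "g \<in> carrier G" and i: "i \<in> I"
  shows "probe G P l1 i1 k m (l,g,i) = (l1, P k l \<otimes>\<^bsub>G\<^esub> g \<otimes>\<^bsub>G\<^esub> P i m, i1)"
proof -
  interpret group G using rd by (simp add: rees_data_def)
  have "P k l \<in> carrier G" "P i m \<in> carrier G" using rd k m l i by (auto simp: rees_data_def)
  then show ?thesis using g by (simp add: probe_def rees_mult_simp)
qed

lemma diff_one:
  assumes rd: "rees_data G P Lam I l1 i1" and A: "A \<in> carrier G" and B: "B \<in> carrier G"
  shows "rees_mult G P (l1,A,i1) (rees_inv G P (l1,B,i1)) = (l1, \<one>\<^bsub>G\<^esub>, i1) \<longleftrightarrow> A = B"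
proof -
  interpret group G using rd by (simp add: rees_data_def)
  have p: "P i1 l1 = \<one>\<^bsub>G\<^esub>" using rd by (simp add: rees_data_def)
  have "rees_mult G P (l1,A,i1) (rees_inv G P (l1,B,i1)) = (l1, A \<otimes>\<^bsub>G\<^esub> inv\<^bsub>G\<^esub> B, i1)"
    using A B by (simp add: rees_mult_simp rees_inv_simp p)
  moreover have "A \<otimes>\<^bsub>G\<^esub> inv\<^bsub>G\<^esub> B = \<one>\<^bsub>G\<^esub> \<longleftrightarrow> A = B"
    using A B by (metis inv_closed inv_equality inv_inv r_inv)
  ultimately show ?thesis by simp
qed

lemma key:
  assumes rd: "rees_data G P Lam I l1 i1" and ns: "nonsingular P Lam I"
    and x: "x \<in> rees_carrier G Lam I" and y: "y \<in> rees_carrier G Lam I"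
  shows "x = y \<longleftrightarrow> (\<forall>k\<in>I. \<forall>m\<in>Lam. probe G P l1 i1 k m x = probe G P l1 i1 k m y)"
proof
  assume "x = y" then show "\<forall>k\<in>I. \<forall>m\<in>Lam. probe G P l1 i1 k m x = probe G P l1 i1 k m y" by simp
next
  assume H: "\<forall>k\<in>I. \<forall>m\<in>Lam. probe G P l1 i1 k m x = probe G P l1 i1 k m y"
  interpret group G using rd by (simp add: rees_data_def)
  obtain l g i where xe: "x = (l,g,i)" and l: "l \<in> Lam" and g: "g \<in> carrier G" and i: "i \<in> I"
    using x by (auto simp: rees_carrier_def)
  obtain l' g' i' where ye: "y = (l',g',i')" and l': "l' \<in> Lam" and g': "g' \<in> carrier G" and i': "i' \<in> I"
    using y by (auto simp: rees_carrier_def)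
  have l1: "l1 \<in> Lam" and i1: "i1 \<in> I" using rd by (auto simp: rees_data_def)
  have PC: "\<And>k m. k \<in> I \<Longrightarrow> m \<in> Lam \<Longrightarrow> P k m \<in> carrier G" using rd by (auto simp: rees_data_def)
  have P1: "\<And>m. m \<in> Lam \<Longrightarrow> P i1 m = \<one>\<^bsub>G\<^esub>" "\<And>k. k \<in> I \<Longrightarrow> P k l1 = \<one>\<^bsub>G\<^esub>" using rd by (auto simp: rees_data_def)
  have E: "\<And>k m. k \<in> I \<Longrightarrow> m \<in> Lam \<Longrightarrow> P k l \<otimes>\<^bsub>G\<^esub> g \<otimes>\<^bsub>G\<^esub> P i m = P k l' \<otimes>\<^bsub>G\<^esub> g' \<otimes>\<^bsub>G\<^esub> P i' m"
    using H probe_val[OF rd _ _ l g i] probe_val[OF rd _ _ l' g' i'] xe ye by fastforce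
  have gg: "g = g'" using E[OF i1 l1] P1 l i l' i' g g' by simp
  have c1: "P k l = P k l'" if k: "k \<in> I" for k
  proof -
    have "P k l \<otimes>\<^bsub>G\<^esub> g = P k l' \<otimes>\<^bsub>G\<^esub> g" using E[OF k l1] P1 i i' gg PC[OF k l] PC[OF k l'] g by simp
    then show ?thesis using PC[OF k l] PC[OF k l'] g by simp
  qed
  have c2: "P i m = P i' m" if m: "m \<in> Lam" for m
  proof -
    have "g \<otimes>\<^bsub>G\<^esub> P i m = g \<otimes>\<^bsub>G\<^esub> P i' m" using E[OF i1 m] P1 l l' gg g PC[OF i m] PC[OF i' m] by simp
    then show ?thesis using PC[OF i m] PC[OF i' m] g by simp
  qed
  have "l = l'" using ns c1 l l' unfolding nonsingular_def by blast
  moreover have "i = i'" using ns c2 i i' unfolding nonsingular_def by blast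
  ultimately show "x = y" using xe ye gg by simp
qed


definition probeT where
  "probeT G l1 i1 k m t = Mul (Mul (Cst (l1, \<one>\<^bsub>G\<^esub>, k)) t) (Cst (m, \<one>\<^bsub>G\<^esub>, i1))"

lemma teval_probeT: "teval G P xs (probeT G l1 i1 k m t) = probe G P l1 i1 k m (teval G P xs t)"
  by (simp add: probeT_def probe_def)

lemma probe_eq:
  assumes rd: "rees_data G P Lam I l1 i1" and k: "k \<in> I" and m: "m \<in> Lam"
    and x: "x \<in> rees_carrier G Lam I" and y: "y \<in> rees_carrier G Lam I"
  shows "rees_mult G P (probe G P l1 i1 k m x) (rees_inv G P (probe G P l1 i1 k m y)) = (l1, \<one>\<^bsub>G\<^esub>, i1)
     \<longleftrightarrow> probe G P l1 i1 k m x = probe G P l1 i1 k m y"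
proof -
  interpret group G using rd by (simp add: rees_data_def)
  have PC: "\<And>k m. k \<in> I \<Longrightarrow> m \<in> Lam \<Longrightarrow> P k m \<in> carrier G" using rd by (auto simp: rees_data_def)
  obtain l g i where xe: "x = (l,g,i)" and l: "l \<in> Lam" and g: "g \<in> carrier G" and i: "i \<in> I"
    using x by (auto simp: rees_carrier_def)
  obtain l' g' i' where ye: "y = (l',g',i')" and l': "l' \<in> Lam" and g': "g' \<in> carrier G" and i': "i' \<in> I"
    using y by (auto simp: rees_carrier_def)
  show ?thesis
    unfolding xe ye probe_val[OF rd k m l g i] probe_val[OF rd k m l' g' i']
    using diff_one[OF rd, of "P k l \<otimes>\<^bsub>G\<^esub> g \<otimes>\<^bsub>G\<^esub> P i m" "P k l' \<otimes>\<^bsub>G\<^esub> g' \<otimes>\<^bsub>G\<^esub> P i' m"]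
      PC k m l g i l' g' i' by auto
qed

theorem mainTheorem10:
  fixes G :: "('g, 'b) monoid_scheme" and P :: "'i \<Rightarrow> 'l \<Rightarrow> 'g"
    and Lam :: "'l set" and I :: "'i set" and l1 :: 'l and i1 :: 'i
    and n :: nat and Y :: "('l \<times> 'g \<times> 'i) list set"
  assumes "rees_data G P Lam I l1 i1"
    and "nonsingular P Lam I"
    and "algebraic_set G P Lam I n Y"
  shows "\<exists>T. (\<forall>t \<in> T. is_term (rees_carrier G Lam I) n t)
            \<and> Y = solset G P Lam I n {(t, Cst (l1, \<one>\<^bsub>G\<^esub>, i1)) | t. t \<in> T}"
proof -
  note rd = assms(1)
  obtain E where Et: "\<forall>(t, s) \<in> E. is_term (rees_carrier G Lam I) n t \<and> is_term (rees_carrier G Lam I) n s"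
    and Y: "Y = solset G P Lam I n E"
    using assms(3) unfolding algebraic_set_def by blast
  define T where "T = {Mul (probeT G l1 i1 k m t) (Inv (probeT G l1 i1 k m s)) | k m t s.
     k \<in> I \<and> m \<in> Lam \<and> (t, s) \<in> E}"
  have one: "\<one>\<^bsub>G\<^esub> \<in> carrier G" using rd by (simp add: rees_data_def group.is_monoid monoid.one_closed)
  have l1: "l1 \<in> Lam" and i1: "i1 \<in> I" using rd by (auto simp: rees_data_def)
  have "\<forall>u \<in> T. is_term (rees_carrier G Lam I) n u"
    using Et one l1 i1 by (fastforce simp: T_def probeT_def is_term_def rees_carrier_def)
  moreover have "Y = solset G P Lam I n {(t, Cst (l1, \<one>\<^bsub>G\<^esub>, i1)) | t. t \<in> T}"
  proof -
    have "(\<forall>(t, s) \<in> E. teval G P xs t = teval G P xs s) \<longleftrightarrow>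
          (\<forall>(t, s) \<in> {(t, Cst (l1, \<one>\<^bsub>G\<^esub>, i1)) | t. t \<in> T}. teval G P xs t = teval G P xs s)"
      if xs: "xs \<in> points G Lam I n" for xs
    proof -
      have C: "\<And>t. is_term (rees_carrier G Lam I) n t \<Longrightarrow> teval G P xs t \<in> rees_carrier G Lam I"
        using teval_in[OF rd _ xs] by blast
      let ?Q = "\<lambda>u. teval G P xs u = (l1, \<one>\<^bsub>G\<^esub>, i1)"
      have pw: "teval G P xs t = teval G P xs s \<longleftrightarrow>
          (\<forall>k\<in>I. \<forall>m\<in>Lam. ?Q (Mul (probeT G l1 i1 k m t) (Inv (probeT G l1 i1 k m s))))"
        if ts: "(t, s) \<in> E" for t s
      proof -
        have Ct: "teval G P xs t \<in> rees_carrier G Lam I" and Cs: "teval G P xs s \<in> rees_carrier G Lam I"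
          using C Et ts by auto
        have eq: "?Q (Mul (probeT G l1 i1 k m t) (Inv (probeT G l1 i1 k m s))) \<longleftrightarrow>
            probe G P l1 i1 k m (teval G P xs t) = probe G P l1 i1 k m (teval G P xs s)"
          if "k \<in> I" "m \<in> Lam" for k m
          using probe_eq[OF rd that Ct Cs] by (simp add: teval_probeT)
        show ?thesis using key[OF rd assms(2) Ct Cs] eq by auto
      qed
      show ?thesis
      proof
        assume A: "\<forall>(t, s) \<in> E. teval G P xs t = teval G P xs s"
        show "\<forall>(t, s) \<in> {(t, Cst (l1, \<one>\<^bsub>G\<^esub>, i1)) | t. t \<in> T}. teval G P xs t = teval G P xs s"
        proof (intro ballI, clarify)
          fix u assume "u \<in> T"
          then obtain k m t s where u: "u = Mul (probeT G l1 i1 k m t) (Inv (probeT G l1 i1 k m s))"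
            and k: "k \<in> I" and m: "m \<in> Lam" and ts: "(t, s) \<in> E" unfolding T_def by blast
          have "teval G P xs t = teval G P xs s" using A ts by blast
          then show "teval G P xs u = teval G P xs (Cst (l1, \<one>\<^bsub>G\<^esub>, i1))"
            using pw[OF ts] k m u by simp
        qed
      next
        assume A: "\<forall>(t, s) \<in> {(t, Cst (l1, \<one>\<^bsub>G\<^esub>, i1)) | t. t \<in> T}. teval G P xs t = teval G P xs s"
        show "\<forall>(t, s) \<in> E. teval G P xs t = teval G P xs s"
        proof (intro ballI, clarify)
          fix t s assume ts: "(t, s) \<in> E"
          have "\<forall>k\<in>I. \<forall>m\<in>Lam. ?Q (Mul (probeT G l1 i1 k m t) (Inv (probeT G l1 i1 k m s)))"
          proof (intro ballI)
            fix k m assume k: "k \<in> I" and m: "m \<in> Lam"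
            have "Mul (probeT G l1 i1 k m t) (Inv (probeT G l1 i1 k m s)) \<in> T"
              unfolding T_def using k m ts by blast
            then show "?Q (Mul (probeT G l1 i1 k m t) (Inv (probeT G l1 i1 k m s)))"
              using A by fastforce
          qed
          then show "teval G P xs t = teval G P xs s" using pw[OF ts] by blast
        qed
      qed
    qed
    then show ?thesis unfolding Y solset_def by blast
  qed
  ultimately show ?thesis by blast
qed

end
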